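(* Let $\mathcal{G}$ be a linear $3$-partite $3$-graph with vertex classes $\mathcal{A},\mathcal{B},\mathcal{C}$ (every hyperedge has exactly one vertex in each class). Let $G$ be a simple bipartite graph with parts $A=\binom{\mathcal{A}}{2}$ and $B=\binom{\mathcal{B}}{2}$ such that for every edge of $G$ between $\{a_1,a_2\}\in A$ and $\{b_1,b_2\}\in B$ there is some $c\in\mathcal{C}$ with $a_1b_1c,\ a_2b_2c\in E(\mathcal{G})$, or there is some $c'\in\mathcal{C}$ with $a_1b_2c',\ a_2b_1c'\in E(\mathcal{G})$. Let $k\ge t\ge 4$ be integers, and suppose $F$ is a $2$-degenerate subgraph of $G$ with $k$ vertices and $2k-t$ edges. Then $\mathcal{G}$ contains a subgraph $\mathcal{F}$ such that (1) $|V(\mathcal{F})|-4t\le |E(\mathcal{F})|\le 4k$, and (2) either $|E(\mathcal{F})|\ge 4k-10^4t^3$ or $|E(\mathcal{F})|\ge |V(\mathcal{F})|>0$.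
   Context: A $3$-graph is linear if any two distinct hyperedges share at most one vertex. A graph is $2$-degenerate if its vertices can be ordered $v_1,\dots,v_k$ so that each $v_i$ has at most $2$ neighbours among $v_1,\dots,v_{i-1}$. A subgraph $\mathcal{F}$ of $\mathcal{G}$ consists of a vertex set $V(\mathcal{F})\subseteq V(\mathcal{G})$ and a set $E(\mathcal{F})\subseteq E(\mathcal{G})$ of hyperedges each contained in $V(\mathcal{F})$ (isolated vertices allowed). *)

theory Defs
  imports Main
begin

definition tripartite_3graph :: "'a set \<Rightarrow> 'a set \<Rightarrow> 'a set \<Rightarrow> 'a set set \<Rightarrow> bool" where
  "tripartite_3graph Aa Bb Cc E \<longleftrightarrow>
     finite Aa \<and> finite Bb \<and> finite Cc \<and>
     Aa \<inter> Bb = {} \<and> Aa \<inter> Cc = {} \<and> Bb \<inter> Cc = {} \<and>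
     (\<forall>e\<in>E. \<exists>a\<in>Aa. \<exists>b\<in>Bb. \<exists>c\<in>Cc. e = {a, b, c})"

definition linear_hg :: "'a set set \<Rightarrow> bool" where
  "linear_hg E \<longleftrightarrow> (\<forall>e\<in>E. \<forall>f\<in>E. e \<noteq> f \<longrightarrow> card (e \<inter> f) \<le> 1)"

definition two_degenerate :: "'v set \<Rightarrow> ('v \<times> 'v) set \<Rightarrow> bool" where
  "two_degenerate V E \<longleftrightarrow>
     (\<exists>vs. distinct vs \<and> set vs = V \<and>
        (\<forall>i<length vs. card {j. j < i \<and> ((vs!j, vs!i) \<in> E \<or> (vs!i, vs!j) \<in> E)} \<le> 2))"

end

theory Submission imports Defs begin

lemma tri_disj: assumes tri: "tripartite_3graph Aa Bb Cc E" shows "Aa \<inter> Bb = {}" "Aa \<inter> Cc = {}" "Bb \<inter> Cc = {}"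
  using tri unfolding tripartite_3graph_def by simp_all
lemma tri_fin: assumes tri: "tripartite_3graph Aa Bb Cc E" shows "finite Aa" "finite Bb" "finite Cc"
  using tri unfolding tripartite_3graph_def by simp_all
lemma tri_edge: assumes tri: "tripartite_3graph Aa Bb Cc E" and "e \<in> E" shows "\<exists>a\<in>Aa. \<exists>b\<in>Bb. \<exists>c\<in>Cc. e = {a, b, c}"
  using tri assms(2) unfolding tripartite_3graph_def by blast

lemma lin_common2:
  assumes tri: "tripartite_3graph Aa Bb Cc E" and lin: "linear_hg E"
    and x: "x \<in> E" and y: "y \<in> E" and u: "u \<in> x" "u \<in> y" and v: "v \<in> x" "v \<in> y" and uv: "u \<noteq> v"
  shows "x = y"
proof (rule ccontr)
  assume "x \<noteq> y"
  hence "card (x \<inter> y) \<le> 1" using lin x y unfolding linear_hg_def by blast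
  moreover have "finite (x \<inter> y)"
  proof -
    obtain a b c where "x = {a,b,c}" using tri_edge[OF tri x] by blast
    thus ?thesis by auto
  qed
  moreover have "{u,v} \<subseteq> x \<inter> y" using u v by auto
  ultimately have "card {u,v} \<le> 1" using card_mono[of "x \<inter> y" "{u,v}"] by linarith
  thus False using uv by simp
qed

lemma per_c: assumes "2 \<le> m" "m \<le> M" shows "m * (m - 1) + 2 * M \<le> m + M * (m::nat)"
proof -
  obtain n where n: "m = n + 2" using assms(1) by (metis add.commute le_Suc_ex)
  have "n + 2 \<le> M" using assms(2) n by simp
  hence h: "(n + 2) * n \<le> M * n" by (rule mult_right_mono) simp
  have e1: "m * (m - 1) + 2 * M = (n + 2) * n + (n + 2) + 2 * M" using n by (simp add: algebra_simps)
  have e2: "m + M * m = (n + 2) + M * n + 2 * M" using n by (simp add: algebra_simps)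
  show ?thesis unfolding e1 e2 using h by linarith
qed

locale lsetup =
  fixes Aa Bb Cc :: "'a set" and E :: "'a set set" and EF :: "('a set \<times> 'a set) set"
    and A1 A2 B1 B2 L :: "'a set \<times> 'a set \<Rightarrow> 'a"
  assumes tri: "tripartite_3graph Aa Bb Cc E" and lin: "linear_hg E"
    and sel: "\<And>f. f \<in> EF \<Longrightarrow> fst f = {A1 f, A2 f} \<and> snd f = {B1 f, B2 f} \<and>
        A1 f \<in> Aa \<and> A2 f \<in> Aa \<and> B1 f \<in> Bb \<and> B2 f \<in> Bb \<and> A1 f \<noteq> A2 f \<and> B1 f \<noteq> B2 f \<and>
        L f \<in> Cc \<and> {A1 f, B1 f, L f} \<in> E \<and> {A2 f, B2 f, L f} \<in> E"
begin

lemma disj: "Aa \<inter> Bb = {}" "Aa \<inter> Cc = {}" "Bb \<inter> Cc = {}"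
  using tri_disj[OF tri] .

lemma nAB: "x \<in> Aa \<Longrightarrow> x \<notin> Bb" and nAC: "x \<in> Aa \<Longrightarrow> x \<notin> Cc" and nBC: "x \<in> Bb \<Longrightarrow> x \<notin> Cc"
  using disj by blast+

lemma trip_eq:
  assumes e: "{a,b,c} = {a',b',c'}" and h: "a\<in>Aa" "a'\<in>Aa" "b\<in>Bb" "b'\<in>Bb" "c\<in>Cc" "c'\<in>Cc"
  shows "a = a' \<and> b = b' \<and> c = c'"
proof -
  have m: "a \<in> {a',b',c'}" "b \<in> {a',b',c'}" "c \<in> {a',b',c'}" by (simp_all add: e[symmetric])
  have n: "a \<noteq> b'" "a \<noteq> c'" "b \<noteq> a'" "b \<noteq> c'" "c \<noteq> a'" "c \<noteq> b'"
    using h nAB nAC nBC by metis+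
  show ?thesis using m n by simp
qed

definition cl1 where "cl1 f = {A1 f, B1 f, L f}"
definition cl2 where "cl2 f = {A2 f, B2 f, L f}"
definition CS where "CS = (\<Union>f\<in>EF. {cl1 f, cl2 f})"
definition cellof where "cellof f z = (if z = A1 f \<or> z = B1 f then cl1 f else cl2 f)"

lemma selx:
  assumes f: "f \<in> EF"
  shows "fst f = {A1 f, A2 f}" "snd f = {B1 f, B2 f}" "A1 f \<in> Aa" "A2 f \<in> Aa" "B1 f \<in> Bb" "B2 f \<in> Bb"
   "A1 f \<noteq> A2 f" "B1 f \<noteq> B2 f" "L f \<in> Cc" "cl1 f \<in> E" "cl2 f \<in> E"
   "A1 f \<noteq> B1 f" "A1 f \<noteq> B2 f" "A2 f \<noteq> B1 f" "A2 f \<noteq> B2 f"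
   "A1 f \<noteq> L f" "A2 f \<noteq> L f" "B1 f \<noteq> L f" "B2 f \<noteq> L f"
proof -
  note s = sel[OF f]
  show "fst f = {A1 f, A2 f}" "snd f = {B1 f, B2 f}" "A1 f \<in> Aa" "A2 f \<in> Aa" "B1 f \<in> Bb" "B2 f \<in> Bb"
   "A1 f \<noteq> A2 f" "B1 f \<noteq> B2 f" "L f \<in> Cc" "cl1 f \<in> E" "cl2 f \<in> E"
    using s unfolding cl1_def cl2_def by simp_all
  have m: "A1 f \<in> Aa" "A2 f \<in> Aa" "B1 f \<in> Bb" "B2 f \<in> Bb" "L f \<in> Cc" using s by simp_all
  show "A1 f \<noteq> B1 f" using m(1,3) nAB by auto
  show "A1 f \<noteq> B2 f" using m(1,4) nAB by auto
  show "A2 f \<noteq> B1 f" using m(2,3) nAB by auto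
  show "A2 f \<noteq> B2 f" using m(2,4) nAB by auto
  show "A1 f \<noteq> L f" using m(1,5) nAC by auto
  show "A2 f \<noteq> L f" using m(2,5) nAC by auto
  show "B1 f \<noteq> L f" using m(3,5) nBC by auto
  show "B2 f \<noteq> L f" using m(4,5) nBC by auto
qed

lemma cl_E: "f \<in> EF \<Longrightarrow> cl1 f \<in> E" "f \<in> EF \<Longrightarrow> cl2 f \<in> E"
  using selx by auto

lemma cl_Cc: "f \<in> EF \<Longrightarrow> cl1 f \<inter> Cc = {L f}" "f \<in> EF \<Longrightarrow> cl2 f \<inter> Cc = {L f}"
  unfolding cl1_def cl2_def using selx(3-6,9)[of f] nAC nBC by blast+

lemma cl_ne: "f \<in> EF \<Longrightarrow> cl1 f \<noteq> cl2 f"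
proof
  assume f: "f \<in> EF" and "cl1 f = cl2 f"
  hence "A1 f = A2 f" using trip_eq[of "A1 f" "B1 f" "L f" "A2 f" "B2 f" "L f"] selx[OF f]
    unfolding cl1_def cl2_def by blast
  thus False using selx[OF f] by simp
qed

lemma same_fst_lab:
  assumes f: "f \<in> EF" and g: "g \<in> EF" and fg: "fst f = fst g" and l: "L f = L g"
  shows "f = g"
proof -
  note sf = selx[OF f] and sg = selx[OF g]
  have "snd f = snd g"
  proof (cases "A1 f = A1 g")
    case True
    hence a2: "A2 f = A2 g" using fg sf(1,2,7,8) sg(1,2,7,8) by (metis doubleton_eq_iff)
    have "cl1 f = cl1 g" using lin_common2[OF tri lin cl_E(1)[OF f] cl_E(1)[OF g], of "A1 f" "L f"]
      using True l sf unfolding cl1_def by simp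
    hence "B1 f = B1 g" using trip_eq[of "A1 f" "B1 f" "L f" "A1 g" "B1 g" "L g"] sf sg unfolding cl1_def by blast
    moreover have "cl2 f = cl2 g" using lin_common2[OF tri lin cl_E(2)[OF f] cl_E(2)[OF g], of "A2 f" "L f"]
      using a2 l sf unfolding cl2_def by simp
    hence "B2 f = B2 g" using trip_eq[of "A2 f" "B2 f" "L f" "A2 g" "B2 g" "L g"] sf sg unfolding cl2_def by blast
    ultimately show ?thesis using sf sg by simp
  next
    case False
    hence a1: "A1 f = A2 g" and a2: "A2 f = A1 g" using fg sf(1,2,7,8) sg(1,2,7,8) by (metis doubleton_eq_iff)+
    have "cl1 f = cl2 g" using lin_common2[OF tri lin cl_E(1)[OF f] cl_E(2)[OF g], of "A1 f" "L f"]
      using a1 l sf unfolding cl1_def cl2_def by simp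
    hence "B1 f = B2 g" using trip_eq[of "A1 f" "B1 f" "L f" "A2 g" "B2 g" "L g"] sf sg unfolding cl1_def cl2_def by blast
    moreover have "cl2 f = cl1 g" using lin_common2[OF tri lin cl_E(2)[OF f] cl_E(1)[OF g], of "A2 f" "L f"]
      using a2 l sf unfolding cl1_def cl2_def by simp
    hence "B2 f = B1 g" using trip_eq[of "A2 f" "B2 f" "L f" "A1 g" "B1 g" "L g"] sf sg unfolding cl1_def cl2_def by blast
    ultimately show ?thesis using sf sg by auto
  qed
  thus ?thesis using fg by (simp add: prod_eq_iff)
qed

lemma same_snd_lab:
  assumes f: "f \<in> EF" and g: "g \<in> EF" and fg: "snd f = snd g" and l: "L f = L g"
  shows "f = g"
proof -
  note sf = selx[OF f] and sg = selx[OF g]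
  have "fst f = fst g"
  proof (cases "B1 f = B1 g")
    case True
    hence a2: "B2 f = B2 g" using fg sf(1,2,7,8) sg(1,2,7,8) by (metis doubleton_eq_iff)
    have "cl1 f = cl1 g" using lin_common2[OF tri lin cl_E(1)[OF f] cl_E(1)[OF g], of "B1 f" "L f"]
      using True l sf unfolding cl1_def by simp
    hence "A1 f = A1 g" using trip_eq[of "A1 f" "B1 f" "L f" "A1 g" "B1 g" "L g"] sf sg unfolding cl1_def by blast
    moreover have "cl2 f = cl2 g" using lin_common2[OF tri lin cl_E(2)[OF f] cl_E(2)[OF g], of "B2 f" "L f"]
      using a2 l sf unfolding cl2_def by simp
    hence "A2 f = A2 g" using trip_eq[of "A2 f" "B2 f" "L f" "A2 g" "B2 g" "L g"] sf sg unfolding cl2_def by blast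
    ultimately show ?thesis using sf sg by simp
  next
    case False
    hence a1: "B1 f = B2 g" and a2: "B2 f = B1 g" using fg sf(1,2,7,8) sg(1,2,7,8) by (metis doubleton_eq_iff)+
    have "cl1 f = cl2 g" using lin_common2[OF tri lin cl_E(1)[OF f] cl_E(2)[OF g], of "B1 f" "L f"]
      using a1 l sf unfolding cl1_def cl2_def by simp
    hence "A1 f = A2 g" using trip_eq[of "A1 f" "B1 f" "L f" "A2 g" "B2 g" "L g"] sf sg unfolding cl1_def cl2_def by blast
    moreover have "cl2 f = cl1 g" using lin_common2[OF tri lin cl_E(2)[OF f] cl_E(1)[OF g], of "B2 f" "L f"]
      using a2 l sf unfolding cl1_def cl2_def by simp
    hence "A2 f = A1 g" using trip_eq[of "A2 f" "B2 f" "L f" "A1 g" "B1 g" "L g"] sf sg unfolding cl1_def cl2_def by blast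
    ultimately show ?thesis using sf sg by auto
  qed
  thus ?thesis using fg by (simp add: prod_eq_iff)
qed

lemma cellof_props:
  assumes f: "f \<in> EF" and z: "z \<in> fst f \<union> snd f"
  shows "cellof f z \<in> {cl1 f, cl2 f}" "z \<in> cellof f z" "cellof f z \<inter> Cc = {L f}"
    "\<And>z'. z' \<in> cellof f z \<Longrightarrow> z' \<in> Aa \<union> Bb \<Longrightarrow> z' \<noteq> z \<Longrightarrow> z \<in> fst f \<Longrightarrow> z' \<in> snd f"
    "\<And>z'. z' \<in> cellof f z \<Longrightarrow> z' \<in> Aa \<union> Bb \<Longrightarrow> z' \<noteq> z \<Longrightarrow> z \<in> snd f \<Longrightarrow> z' \<in> fst f"
proof -
  note sf = selx[OF f]
  show "cellof f z \<in> {cl1 f, cl2 f}" unfolding cellof_def by simp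
  show "z \<in> cellof f z" using z sf unfolding cellof_def cl1_def cl2_def by auto
  show "cellof f z \<inter> Cc = {L f}" using cl_Cc[OF f] unfolding cellof_def by simp
  fix z' assume z': "z' \<in> cellof f z" "z' \<in> Aa \<union> Bb" "z' \<noteq> z"
  have z'L: "z' \<noteq> L f" using z'(2) sf(9) nAC nBC by auto
  { assume zf: "z \<in> fst f"
    show "z' \<in> snd f"
    proof (cases "z = A1 f")
      case True thus ?thesis using z' z'L sf unfolding cellof_def cl1_def by auto
    next
      case False
      hence "z = A2 f" "z \<noteq> B1 f" using zf sf by auto
      thus ?thesis using z' z'L sf False unfolding cellof_def cl2_def by auto
    qed }
  { assume zf: "z \<in> snd f"
    show "z' \<in> fst f"
    proof (cases "z = B1 f")
      case True thus ?thesis using z' z'L sf unfolding cellof_def cl1_def by auto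
    next
      case False
      hence "z = B2 f" "z \<noteq> A1 f" using zf sf by auto
      thus ?thesis using z' z'L sf False unfolding cellof_def cl2_def by auto
    qed }
qed

definition Sy where "Sy = L ` EF"
definition CSc where "CSc c = {x \<in> CS. c \<in> x}"

lemma CS_sub_E: "CS \<subseteq> E"
  unfolding CS_def using cl_E by blast

lemma CS_fin: "finite EF \<Longrightarrow> finite CS"
  unfolding CS_def by blast

lemma card_CS_le: assumes "finite EF" shows "card CS \<le> 2 * card EF"
proof -
  have "card CS \<le> (\<Sum>f\<in>EF. card {cl1 f, cl2 f})" unfolding CS_def by (rule card_UN_le[OF assms])
  also have "\<dots> \<le> (\<Sum>f\<in>EF. 2)" by (rule sum_mono) (simp add: card_insert_le_m1)
  finally show ?thesis by simp
qed

lemma CS_lab: "x \<in> CS \<Longrightarrow> \<exists>f\<in>EF. x \<inter> Cc = {L f} \<and> L f \<in> x"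
  unfolding CS_def using cl_Cc unfolding cl1_def cl2_def by blast

lemma Sy_Cc: "Sy \<subseteq> Cc" unfolding Sy_def using selx(9) by blast

lemma CS_union: "CS = (\<Union>c\<in>Sy. CSc c)"
proof
  show "CS \<subseteq> (\<Union>c\<in>Sy. CSc c)"
  proof
    fix x assume x: "x \<in> CS"
    then obtain f where f: "f \<in> EF" "L f \<in> x" using CS_lab by blast
    thus "x \<in> (\<Union>c\<in>Sy. CSc c)" using x unfolding Sy_def CSc_def by blast
  qed
qed (auto simp: CSc_def)

lemma CSc_disj: assumes "c \<in> Sy" "c' \<in> Sy" "c \<noteq> c'" shows "CSc c \<inter> CSc c' = {}"
proof (rule ccontr)
  assume "CSc c \<inter> CSc c' \<noteq> {}"
  then obtain x where x: "x \<in> CS" "c \<in> x" "c' \<in> x" unfolding CSc_def by blast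
  then obtain f where "x \<inter> Cc = {L f}" using CS_lab by blast
  moreover have "c \<in> Cc" "c' \<in> Cc" using assms Sy_Cc by blast+
  ultimately have "c \<in> {L f}" "c' \<in> {L f}" using x by blast+
  thus False using assms(3) by simp
qed

lemma card_CS_sum: assumes "finite EF" shows "card CS = (\<Sum>c\<in>Sy. card (CSc c))"
proof -
  have "finite Sy" unfolding Sy_def using assms by simp
  moreover have "\<forall>c\<in>Sy. finite (CSc c)" using CS_fin[OF assms] unfolding CSc_def by simp
  moreover have "\<forall>c\<in>Sy. \<forall>c'\<in>Sy. c \<noteq> c' \<longrightarrow> CSc c \<inter> CSc c' = {}" using CSc_disj by blast
  ultimately have "card (\<Union>c\<in>Sy. CSc c) = (\<Sum>c\<in>Sy. card (CSc c))"
    by (rule card_UN_disjoint)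
  thus ?thesis using CS_union by simp
qed

lemma CSc_ge2: assumes fin: "finite EF" and c: "c \<in> Sy" shows "2 \<le> card (CSc c)"
proof -
  obtain f where f: "f \<in> EF" "c = L f" using c unfolding Sy_def by blast
  have "{cl1 f, cl2 f} \<subseteq> CSc c" using f unfolding CSc_def CS_def cl1_def cl2_def by auto
  moreover have "finite (CSc c)" using CS_fin[OF fin] unfolding CSc_def by simp
  ultimately have "card {cl1 f, cl2 f} \<le> card (CSc c)" by (rule card_mono[rotated])
  thus ?thesis using cl_ne[OF f(1)] by simp
qed

lemma EF_sum: assumes "finite EF" shows "card EF = (\<Sum>c\<in>Sy. card {f\<in>EF. L f = c})"
proof -
  have "EF = (\<Union>c\<in>Sy. {f\<in>EF. L f = c})" unfolding Sy_def by blast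
  moreover have "finite Sy" unfolding Sy_def using assms by simp
  ultimately show ?thesis using card_UN_disjoint[of Sy "\<lambda>c. {f\<in>EF. L f = c}"] assms by auto
qed

lemma pair_inj: assumes f: "f \<in> EF" and g: "g \<in> EF" and e: "{cl1 f, cl2 f} = {cl1 g, cl2 g}" shows "f = g"
proof -
  have u: "\<Union>{cl1 f, cl2 f} = \<Union>{cl1 g, cl2 g}" using e by simp
  have hA: "\<Union>{cl1 h, cl2 h} \<inter> Aa = fst h" and hB: "\<Union>{cl1 h, cl2 h} \<inter> Bb = snd h" if h: "h \<in> EF" for h
  proof -
    note sh = selx[OF h]
    have n: "B1 h \<notin> Aa" "B2 h \<notin> Aa" "L h \<notin> Aa" "A1 h \<notin> Bb" "A2 h \<notin> Bb" "L h \<notin> Bb"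
      using sh(3-6,9) nAB nAC nBC by blast+
    show "\<Union>{cl1 h, cl2 h} \<inter> Aa = fst h" using n sh(1,3,4) unfolding cl1_def cl2_def by auto
    show "\<Union>{cl1 h, cl2 h} \<inter> Bb = snd h" using n sh(2,5,6) unfolding cl1_def cl2_def by auto
  qed
  have "fst f = fst g" using hA[OF f] hA[OF g] u by simp
  moreover have "snd f = snd g" using hB[OF f] hB[OF g] u by simp
  ultimately show ?thesis by (simp add: prod_eq_iff)
qed

lemma EFc_le: assumes fin: "finite EF" shows "card {f\<in>EF. L f = c} \<le> card (CSc c) choose 2"
proof -
  have fc: "finite (CSc c)" using CS_fin[OF fin] unfolding CSc_def by simp
  have "inj_on (\<lambda>f. {cl1 f, cl2 f}) {f\<in>EF. L f = c}" unfolding inj_on_def using pair_inj by blast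
  moreover have "(\<lambda>f. {cl1 f, cl2 f}) ` {f\<in>EF. L f = c} \<subseteq> {S. S \<subseteq> CSc c \<and> card S = 2}"
    using cl_ne unfolding CSc_def CS_def cl1_def cl2_def by auto
  moreover have "finite {S. S \<subseteq> CSc c \<and> card S = 2}" using fc by simp
  ultimately have "card {f\<in>EF. L f = c} \<le> card {S. S \<subseteq> CSc c \<and> card S = 2}"
    using card_inj_on_le by blast
  also have "\<dots> = card (CSc c) choose 2" using n_subsets[OF fc] by simp
  finally show ?thesis .
qed

lemma fs_ne: assumes f: "f \<in> EF" and g: "g \<in> EF" shows "fst f \<noteq> snd g"
proof
  assume "fst f = snd g"
  hence "A1 f \<in> {B1 g, B2 g}" using selx(1,2)[OF f] selx(1,2)[OF g] by auto
  thus False using selx(3)[OF f] selx(5,6)[OF g] nAB by auto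
qed

lemma order_bound:
  assumes fin: "finite EF"
    and dist: "distinct vs"
    and EFin: "\<forall>f\<in>EF. fst f \<in> set vs \<and> snd f \<in> set vs"
    and degb: "\<forall>i<length vs. card {j. j < i \<and> ((vs!j, vs!i) \<in> EF \<or> (vs!i, vs!j) \<in> EF)} \<le> 2"
    and vs2: "\<forall>P\<in>set vs. card P = 2 \<and> (P \<subseteq> Aa \<or> P \<subseteq> Bb)"
  shows "2 * card (\<Union>(set vs)) + 2 * card EF \<le> card CS + 4 * length vs"
proof -
  define k where "k = length vs"
  define Z where "Z = \<Union>(set vs)"
  define J where "J i = {j. j < i \<and> ((vs!j, vs!i) \<in> EF \<or> (vs!i, vs!j) \<in> EF)}" for i
  define d where "d i = card (J i)" for i
  define edge where "edge i j = (if (vs!i, vs!j) \<in> EF then (vs!i, vs!j) else (vs!j, vs!i))" for i j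
  define v where "v z = (LEAST i. z \<in> vs!i)" for z
  define A where "A z = (\<lambda>j. cellof (edge (v z) j) z) ` J (v z)" for z
  have finJ: "finite (J i)" for i unfolding J_def by simp
  have d2: "d i \<le> 2" if "i < k" for i using degb that unfolding d_def J_def k_def by blast
  have "\<forall>P\<in>set vs. finite P" using vs2 card.infinite by force
  hence finZ: "finite Z" unfolding Z_def by blast
  have ZAB: "Z \<subseteq> Aa \<union> Bb" unfolding Z_def using vs2 by blast
  have edgeJ: "edge i j \<in> EF \<and> ((fst (edge i j) = vs!i \<and> snd (edge i j) = vs!j) \<or> (fst (edge i j) = vs!j \<and> snd (edge i j) = vs!i))"
    if "j \<in> J i" for i j using that unfolding J_def edge_def by auto
  have EF_le: "card EF \<le> (\<Sum>i<k. d i)"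
  proof -
    have "EF \<subseteq> (\<lambda>(i,j). edge i j) ` (SIGMA i:{..<k}. J i)"
    proof
      fix f assume f: "f \<in> EF"
      obtain p where p: "p < k" "vs!p = fst f" using EFin f unfolding k_def by (metis in_set_conv_nth)
      obtain q where q: "q < k" "vs!q = snd f" using EFin f unfolding k_def by (metis in_set_conv_nth)
      have pq: "p \<noteq> q" using p q fs_ne[OF f f] by auto
      have fe: "f = (vs!p, vs!q)" using p q by simp
      show "f \<in> (\<lambda>(i,j). edge i j) ` (SIGMA i:{..<k}. J i)"
      proof (cases "q < p")
        case True
        hence "q \<in> J p" unfolding J_def using f fe by auto
        moreover have "edge p q = f" unfolding edge_def using f fe by auto
        ultimately show ?thesis using p(1) by force
      next
        case False
        hence qp: "p < q" using pq by simp
        hence "p \<in> J q" unfolding J_def using f fe by auto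
        moreover have "(vs!q, vs!p) \<notin> EF"
        proof
          assume "(vs!q, vs!p) \<in> EF"
          thus False using fs_ne[of "(vs!q, vs!p)" f] f q by auto
        qed
        hence "edge q p = f" unfolding edge_def using fe by auto
        ultimately show ?thesis using q(1) by force
      qed
    qed
    hence "card EF \<le> card ((\<lambda>(i,j). edge i j) ` (SIGMA i:{..<k}. J i))"
      by (rule card_mono[rotated]) (simp add: finJ)
    also have "\<dots> \<le> card (SIGMA i:{..<k}. J i)" by (rule card_image_le) (simp add: finJ)
    also have "\<dots> = (\<Sum>i<k. d i)" unfolding d_def using finJ by simp
    finally show ?thesis .
  qed
  have vprops: "v z < k \<and> z \<in> vs!(v z) \<and> (\<forall>j. z \<in> vs!j \<longrightarrow> v z \<le> j)" if zZ: "z \<in> Z" for z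
  proof -
    obtain P where P: "P \<in> set vs" "z \<in> P" using zZ unfolding Z_def by blast
    then obtain i where "i < k" "vs!i = P" unfolding k_def by (metis in_set_conv_nth)
    hence i: "i < k" "z \<in> vs!i" using P by auto
    have "z \<in> vs!(v z)" unfolding v_def by (rule LeastI[of _ i]) (rule i(2))
    moreover have "\<forall>j. z \<in> vs!j \<longrightarrow> v z \<le> j" unfolding v_def by (auto intro: Least_le)
    ultimately show ?thesis using i by (meson le_less_trans)
  qed
  have Jlt: "j < i" if "j \<in> J i" for i j using that unfolding J_def by simp
  have nth_inj: "vs!a = vs!b \<longleftrightarrow> a = b" if "a < k" "b < k" for a b
    using nth_eq_iff_index_eq[OF dist] that unfolding k_def by blast
  have Aprops: "A z \<subseteq> CS \<and> card (A z) = d (v z)" if zZ: "z \<in> Z" for z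
  proof -
    define i where "i = v z"
    have i: "i < k" "z \<in> vs!i" using vprops[OF zZ] unfolding i_def by auto
    have zf: "z \<in> fst (edge i j) \<union> snd (edge i j)" if "j \<in> J i" for j using edgeJ[OF that] i by auto
    have sub: "A z \<subseteq> CS"
    proof
      fix x assume "x \<in> A z"
      then obtain j where j: "j \<in> J i" "x = cellof (edge i j) z" unfolding A_def i_def by blast
      have "x \<in> {cl1 (edge i j), cl2 (edge i j)}" using cellof_props(1)[OF _ zf[OF j(1)]] edgeJ[OF j(1)] j(2) by simp
      thus "x \<in> CS" unfolding CS_def using edgeJ[OF j(1)] by blast
    qed
    have "inj_on (\<lambda>j. cellof (edge i j) z) (J i)"
    proof (rule inj_onI)
      fix j1 j2 assume j1: "j1 \<in> J i" and j2: "j2 \<in> J i" and eq: "cellof (edge i j1) z = cellof (edge i j2) z"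
      define f1 where "f1 = edge i j1"
      define f2 where "f2 = edge i j2"
      have e1: "f1 \<in> EF" "(fst f1 = vs!i \<and> snd f1 = vs!j1) \<or> (fst f1 = vs!j1 \<and> snd f1 = vs!i)"
        using edgeJ[OF j1] unfolding f1_def by auto
      have e2: "f2 \<in> EF" "(fst f2 = vs!i \<and> snd f2 = vs!j2) \<or> (fst f2 = vs!j2 \<and> snd f2 = vs!i)"
        using edgeJ[OF j2] unfolding f2_def by auto
      have zf1: "z \<in> fst f1 \<union> snd f1" using e1(2) i(2) by auto
      have zf2: "z \<in> fst f2 \<union> snd f2" using e2(2) i(2) by auto
      have eq': "cellof f1 z = cellof f2 z" using eq unfolding f1_def f2_def .
      have "{L f1} = {L f2}" using cellof_props(3)[OF e1(1) zf1] cellof_props(3)[OF e2(1) zf2] eq' by simp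
      hence l: "L f1 = L f2" by simp
      have "f1 = f2"
        using e1 e2 same_fst_lab[OF e1(1) e2(1) _ l] same_snd_lab[OF e1(1) e2(1) _ l] fs_ne[OF e1(1) e2(1)] fs_ne[OF e2(1) e1(1)]
        by metis
      have lt: "j1 < k" "j2 < k" using Jlt[OF j1] Jlt[OF j2] i by auto
      have ne: "vs!j1 \<noteq> vs!i" "vs!j2 \<noteq> vs!i" using nth_inj[OF lt(1) i(1)] nth_inj[OF lt(2) i(1)] Jlt[OF j1] Jlt[OF j2] by auto
      have "vs!j1 = vs!j2" using e1(2) e2(2) \<open>f1 = f2\<close> ne by auto
      thus "j1 = j2" using nth_inj[OF lt] by simp
    qed
    hence "card (A z) = d (v z)" unfolding A_def d_def i_def[symmetric] by (simp add: card_image)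
    thus ?thesis using sub by simp
  qed
  have vlt: "v z' < v z" if zZ: "z \<in> Z" and z'Z: "z' \<in> Z" and ne: "z' \<noteq> z" and x: "x \<in> A z" and z'x: "z' \<in> x" for z z' x
  proof -
    define i where "i = v z"
    have i: "i < k" "z \<in> vs!i" using vprops[OF zZ] unfolding i_def by auto
    obtain j where j: "j \<in> J i" "x = cellof (edge i j) z" using x unfolding A_def i_def by blast
    define f where "f = edge i j"
    have e: "f \<in> EF" "(fst f = vs!i \<and> snd f = vs!j) \<or> (fst f = vs!j \<and> snd f = vs!i)"
      using edgeJ[OF j(1)] unfolding f_def by auto
    have zf: "z \<in> fst f \<union> snd f" using e(2) i by auto
    have z'AB: "z' \<in> Aa \<union> Bb" using z'Z ZAB by blast
    have z'x2: "z' \<in> cellof f z" using z'x j(2) unfolding f_def by simp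
    have "z' \<in> vs!j"
    proof (cases "fst f = vs!i \<and> snd f = vs!j")
      case True
      thus ?thesis using cellof_props(4)[OF e(1) zf z'x2 z'AB ne] i(2) by simp
    next
      case False
      hence "fst f = vs!j" "snd f = vs!i" using e(2) by auto
      thus ?thesis using cellof_props(5)[OF e(1) zf z'x2 z'AB ne] i(2) by simp
    qed
    hence "v z' \<le> j" using vprops[OF z'Z] by blast
    thus ?thesis using Jlt[OF j(1)] unfolding i_def by simp
  qed
  have inA: "z \<in> x" if zZ: "z \<in> Z" and xA: "x \<in> A z" for z x
  proof -
    have i: "v z < k" "z \<in> vs!(v z)" using vprops[OF zZ] by auto
    obtain j where j: "j \<in> J (v z)" "x = cellof (edge (v z) j) z" using xA unfolding A_def by blast
    have "z \<in> fst (edge (v z) j) \<union> snd (edge (v z) j)" using edgeJ[OF j(1)] i by auto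
    thus ?thesis using cellof_props(2)[of "edge (v z) j" z] edgeJ[OF j(1)] j(2) by simp
  qed
  have S1: "(\<Sum>z\<in>Z. d (v z)) \<le> card CS"
  proof -
    have fA: "\<forall>z\<in>Z. finite (A z)" unfolding A_def using finJ by simp
    have dj: "\<forall>z\<in>Z. \<forall>z'\<in>Z. z \<noteq> z' \<longrightarrow> A z \<inter> A z' = {}"
    proof (intro ballI impI)
      fix z z' assume z: "z \<in> Z" and z': "z' \<in> Z" and ne: "z \<noteq> z'"
      show "A z \<inter> A z' = {}"
      proof (rule ccontr)
        assume "A z \<inter> A z' \<noteq> {}"
        then obtain x where x: "x \<in> A z" "x \<in> A z'" by blast
        have "v z' < v z" using vlt[OF z z' ne[symmetric] x(1) inA[OF z' x(2)]] .
        moreover have "v z < v z'" using vlt[OF z' z ne x(2) inA[OF z x(1)]] .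
        ultimately show False by simp
      qed
    qed
    have "(\<Sum>z\<in>Z. d (v z)) = (\<Sum>z\<in>Z. card (A z))" using Aprops by simp
    also have "\<dots> = card (\<Union>z\<in>Z. A z)" using card_UN_disjoint[OF finZ fA dj] by simp
    also have "\<dots> \<le> card CS" by (rule card_mono[OF CS_fin[OF fin]]) (use Aprops in blast)
    finally show ?thesis .
  qed
  have S2: "(\<Sum>z\<in>Z. (2 - d (v z))) \<le> (\<Sum>i<k. 2 * (2 - d i))"
  proof -
    have "(\<Sum>z\<in>Z. (2 - d (v z))) = (\<Sum>i\<in>v`Z. (\<Sum>z\<in>{z\<in>Z. v z = i}. (2 - d (v z))))"
      by (rule sum.image_gen[OF finZ])
    also have "\<dots> = (\<Sum>i\<in>v`Z. card {z\<in>Z. v z = i} * (2 - d i))" by simp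
    also have "\<dots> \<le> (\<Sum>i\<in>v`Z. 2 * (2 - d i))"
    proof (rule sum_mono)
      fix i assume "i \<in> v`Z"
      then obtain z0 where z0: "z0 \<in> Z" "i = v z0" by blast
      have ik: "i < k" using vprops[OF z0(1)] z0(2) by simp
      have "{z\<in>Z. v z = i} \<subseteq> vs!i" using vprops by auto
      moreover have "vs!i \<in> set vs" using ik unfolding k_def by simp
      hence "card (vs!i) = 2" using vs2 by blast
      ultimately have "card {z\<in>Z. v z = i} \<le> 2"
        by (metis card_mono card.infinite zero_neq_numeral)
      thus "card {z\<in>Z. v z = i} * (2 - d i) \<le> 2 * (2 - d i)" by (rule mult_right_mono) simp
    qed
    also have "\<dots> \<le> (\<Sum>i<k. 2 * (2 - d i))"
      by (rule sum_mono2) (use vprops in auto)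
    finally show ?thesis .
  qed
  have S3: "(\<Sum>z\<in>Z. d (v z)) + (\<Sum>z\<in>Z. (2 - d (v z))) = 2 * card Z"
  proof -
    have "(\<Sum>z\<in>Z. d (v z)) + (\<Sum>z\<in>Z. (2 - d (v z))) = (\<Sum>z\<in>Z. d (v z) + (2 - d (v z)))"
      by (simp add: sum.distrib)
    also have "\<dots> = (\<Sum>z\<in>Z. 2)" by (rule sum.cong) (use d2 vprops in auto)
    finally show ?thesis by simp
  qed
  have S4: "(\<Sum>i<k. (2 - d i)) + (\<Sum>i<k. d i) = 2 * k"
  proof -
    have "(\<Sum>i<k. (2 - d i)) + (\<Sum>i<k. d i) = (\<Sum>i<k. (2 - d i) + d i)" by (simp add: sum.distrib)
    also have "\<dots> = (\<Sum>i<k. 2)" by (rule sum.cong) (use d2 in auto)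
    finally show ?thesis by simp
  qed
  have "(\<Sum>i<k. 2 * (2 - d i)) = 2 * (\<Sum>i<k. (2 - d i))" by (simp add: sum_distrib_left)
  thus ?thesis using S1 S2 S3 S4 EF_le unfolding Z_def[symmetric] k_def[symmetric] by linarith
qed


lemma m_le_bound: assumes fin: "finite EF" and c: "c \<in> Sy" shows "card (CSc c) + 2 * card Sy \<le> card CS + 2"
proof -
  have fS: "finite Sy" unfolding Sy_def using fin by simp
  have "card CS = card (CSc c) + (\<Sum>c'\<in>Sy - {c}. card (CSc c'))"
    using card_CS_sum[OF fin] sum.remove[OF fS c] by simp
  moreover have "(\<Sum>c'\<in>Sy - {c}. 2) \<le> (\<Sum>c'\<in>Sy - {c}. card (CSc c'))"
    by (rule sum_mono) (use CSc_ge2[OF fin] in blast)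
  moreover have "card (Sy - {c}) = card Sy - 1" using c by (rule card_Diff_singleton)
  moreover have "card Sy > 0" using fS c card_gt_0_iff by blast
  ultimately show ?thesis by simp
qed

lemma quad_bound: assumes fin: "finite EF" and mle: "\<forall>c\<in>Sy. card (CSc c) \<le> M"
  shows "2 * card EF + 2 * M * card Sy \<le> card CS + M * card CS"
proof -
  have "2 * card EF + 2 * M * card Sy = (\<Sum>c\<in>Sy. 2 * card {f\<in>EF. L f = c} + 2 * M)"
    using EF_sum[OF fin] by (simp add: sum.distrib sum_distrib_left)
  also have "\<dots> \<le> (\<Sum>c\<in>Sy. card (CSc c) + M * card (CSc c))"
  proof (rule sum_mono)
    fix c assume c: "c \<in> Sy"
    have "2 * card {f\<in>EF. L f = c} \<le> 2 * (card (CSc c) choose 2)" using EFc_le[OF fin] by simp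
    also have "\<dots> \<le> card (CSc c) * (card (CSc c) - 1)" unfolding choose_two by simp
    finally have "2 * card {f\<in>EF. L f = c} \<le> card (CSc c) * (card (CSc c) - 1)" .
    moreover have "card (CSc c) * (card (CSc c) - 1) + 2 * M \<le> card (CSc c) + M * card (CSc c)"
      using per_c[OF CSc_ge2[OF fin c]] mle c by blast
    ultimately show "2 * card {f\<in>EF. L f = c} + 2 * M \<le> card (CSc c) + M * card (CSc c)" by linarith
  qed
  also have "\<dots> = card CS + M * card CS" using card_CS_sum[OF fin] by (simp add: sum.distrib sum_distrib_left)
  finally show ?thesis .
qed

end


theorem lemma2p2:
  fixes Aa Bb Cc :: "'a set" and E :: "'a set set"
    and EG :: "('a set \<times> 'a set) set"
    and VF :: "'a set set" and EF :: "('a set \<times> 'a set) set"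
    and k t :: nat
  assumes tri: "tripartite_3graph Aa Bb Cc E"
    and lin: "linear_hg E"
    and EG_parts: "EG \<subseteq> {P. P \<subseteq> Aa \<and> card P = 2} \<times> {Q. Q \<subseteq> Bb \<and> card Q = 2}"
    and EG_cond: "\<forall>a1 a2 b1 b2. ({a1, a2}, {b1, b2}) \<in> EG \<longrightarrow>
        (\<exists>c\<in>Cc. {a1, b1, c} \<in> E \<and> {a2, b2, c} \<in> E) \<or>
        (\<exists>c\<in>Cc. {a1, b2, c} \<in> E \<and> {a2, b1, c} \<in> E)"
    and kt: "k \<ge> t" "t \<ge> 4"
    and VF_sub: "VF \<subseteq> {P. P \<subseteq> Aa \<and> card P = 2} \<union> {Q. Q \<subseteq> Bb \<and> card Q = 2}"
    and EF_sub: "EF \<subseteq> EG" and EF_in: "\<forall>(P, Q)\<in>EF. P \<in> VF \<and> Q \<in> VF"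
    and deg: "two_degenerate VF EF"
    and cardV: "card VF = k" and cardE: "card EF = 2 * k - t"
  shows "\<exists>V' E'. V' \<subseteq> Aa \<union> Bb \<union> Cc \<and> E' \<subseteq> E \<and> (\<forall>e\<in>E'. e \<subseteq> V') \<and>
           int (card V') - 4 * int t \<le> int (card E') \<and> card E' \<le> 4 * k \<and>
           (int (card E') \<ge> 4 * int k - 10^4 * int t ^ 3 \<or> (card E' \<ge> card V' \<and> card V' > 0))"
proof -
  define Pr where "Pr f a1 a2 b1 b2 c \<longleftrightarrow> fst f = {a1, a2} \<and> snd f = {b1, b2} \<and>
        a1 \<in> Aa \<and> a2 \<in> Aa \<and> b1 \<in> Bb \<and> b2 \<in> Bb \<and> a1 \<noteq> a2 \<and> b1 \<noteq> b2 \<and>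
        c \<in> Cc \<and> {a1, b1, c} \<in> E \<and> {a2, b2, c} \<in> E" for f a1 a2 b1 b2 c
  have ex: "\<exists>x. Pr f (fst x) (fst (snd x)) (fst (snd (snd x))) (fst (snd (snd (snd x)))) (snd (snd (snd (snd x))))"
    if f: "f \<in> EF" for f
  proof -
    have fG: "f \<in> EG" using f EF_sub by blast
    hence "f \<in> {P. P \<subseteq> Aa \<and> card P = 2} \<times> {Q. Q \<subseteq> Bb \<and> card Q = 2}" using EG_parts by blast
    hence P: "fst f \<subseteq> Aa" "card (fst f) = 2" and Q: "snd f \<subseteq> Bb" "card (snd f) = 2"
      by (simp_all add: mem_Times_iff)
    obtain a1 a2 where a: "fst f = {a1, a2}" "a1 \<noteq> a2" using P(2) unfolding card_2_iff by blast
    obtain b1 b2 where b: "snd f = {b1, b2}" "b1 \<noteq> b2" using Q(2) unfolding card_2_iff by blast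
    have "f = ({a1, a2}, {b1, b2})" using a(1) b(1) by (simp add: prod_eq_iff)
    hence inG: "({a1, a2}, {b1, b2}) \<in> EG" using fG by simp
    have mem: "a1 \<in> Aa" "a2 \<in> Aa" "b1 \<in> Bb" "b2 \<in> Bb" using a b P Q by auto
    from EG_cond inG
    have "(\<exists>c\<in>Cc. {a1, b1, c} \<in> E \<and> {a2, b2, c} \<in> E) \<or> (\<exists>c\<in>Cc. {a1, b2, c} \<in> E \<and> {a2, b1, c} \<in> E)"
      by blast
    thus ?thesis
    proof
      assume "\<exists>c\<in>Cc. {a1, b1, c} \<in> E \<and> {a2, b2, c} \<in> E"
      then obtain c where "c \<in> Cc" "{a1, b1, c} \<in> E" "{a2, b2, c} \<in> E" by blast
      hence "Pr f a1 a2 b1 b2 c" unfolding Pr_def using a b mem by simp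
      thus ?thesis by (intro exI[of _ "(a1, a2, b1, b2, c)"]) simp
    next
      assume "\<exists>c\<in>Cc. {a1, b2, c} \<in> E \<and> {a2, b1, c} \<in> E"
      then obtain c where "c \<in> Cc" "{a1, b2, c} \<in> E" "{a2, b1, c} \<in> E" by blast
      hence "Pr f a1 a2 b2 b1 c" unfolding Pr_def using a b mem by (simp add: insert_commute)
      thus ?thesis by (intro exI[of _ "(a1, a2, b2, b1, c)"]) simp
    qed
  qed
  define Q where "Q f x \<longleftrightarrow> Pr f (fst x) (fst (snd x)) (fst (snd (snd x))) (fst (snd (snd (snd x)))) (snd (snd (snd (snd x))))"
    for f and x :: "'a \<times> 'a \<times> 'a \<times> 'a \<times> 'a"
  have "\<forall>f\<in>EF. \<exists>x. Q f x" unfolding Q_def using ex by blast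
  hence "\<exists>g. \<forall>f\<in>EF. Q f (g f)" by (rule bchoice)
  then obtain g where g0: "\<forall>f\<in>EF. Q f (g f)" by blast
  have g: "\<forall>f\<in>EF. Pr f (fst (g f)) (fst (snd (g f))) (fst (snd (snd (g f)))) (fst (snd (snd (snd (g f))))) (snd (snd (snd (snd (g f)))))"
    using g0 unfolding Q_def .
  define A1 where "A1 f = fst (g f)" for f
  define A2 where "A2 f = fst (snd (g f))" for f
  define B1 where "B1 f = fst (snd (snd (g f)))" for f
  define B2 where "B2 f = fst (snd (snd (snd (g f))))" for f
  define L where "L f = snd (snd (snd (snd (g f))))" for f
  interpret S: lsetup Aa Bb Cc E EF A1 A2 B1 B2 L
  proof (unfold_locales)
    show "tripartite_3graph Aa Bb Cc E" by (rule tri)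
    show "linear_hg E" by (rule lin)
    fix f assume f: "f \<in> EF"
    have "Pr f (A1 f) (A2 f) (B1 f) (B2 f) (L f)"
      using g f unfolding A1_def A2_def B1_def B2_def L_def by blast
    thus "fst f = {A1 f, A2 f} \<and> snd f = {B1 f, B2 f} \<and>
        A1 f \<in> Aa \<and> A2 f \<in> Aa \<and> B1 f \<in> Bb \<and> B2 f \<in> Bb \<and> A1 f \<noteq> A2 f \<and> B1 f \<noteq> B2 f \<and>
        L f \<in> Cc \<and> {A1 f, B1 f, L f} \<in> E \<and> {A2 f, B2 f, L f} \<in> E" unfolding Pr_def .
  qed
  have "0 < card VF" using cardV kt by linarith
  hence finVF: "finite VF" by (rule card_ge_0_finite)
  have finEF: "finite EF"
  proof -
    have "EF \<subseteq> VF \<times> VF" using EF_in by auto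
    thus ?thesis by (rule finite_subset[OF _ finite_cartesian_product[OF finVF finVF]])
  qed
  obtain vs where vs: "distinct vs" "set vs = VF"
    "\<forall>i<length vs. card {j. j < i \<and> ((vs!j, vs!i) \<in> EF \<or> (vs!i, vs!j) \<in> EF)} \<le> 2"
    using deg unfolding two_degenerate_def by blast
  have lenvs: "length vs = k" using distinct_card[OF vs(1)] vs(2) cardV by simp
  have EFin': "\<forall>f\<in>EF. fst f \<in> set vs \<and> snd f \<in> set vs" using EF_in vs(2) by auto
  have vs2: "\<forall>P\<in>set vs. card P = 2 \<and> (P \<subseteq> Aa \<or> P \<subseteq> Bb)"
  proof
    fix P assume "P \<in> set vs"
    hence "P \<in> {P. P \<subseteq> Aa \<and> card P = 2} \<union> {Q. Q \<subseteq> Bb \<and> card Q = 2}" using VF_sub vs(2) by blast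
    thus "card P = 2 \<and> (P \<subseteq> Aa \<or> P \<subseteq> Bb)" by blast
  qed
  have ob: "2 * card (\<Union>VF) + 2 * card EF \<le> card S.CS + 4 * k"
    using S.order_bound[OF finEF vs(1) EFin' vs(3) vs2] unfolding vs(2) lenvs .
  define Z where "Z = \<Union>VF"
  define V' where "V' = Z \<union> S.Sy"
  have ZAB: "Z \<subseteq> Aa \<union> Bb" unfolding Z_def using VF_sub by blast
  have "\<forall>P\<in>VF. finite P"
  proof
    fix P assume "P \<in> VF"
    hence "card P = 2" using VF_sub by blast
    thus "finite P" by (intro card_ge_0_finite) simp
  qed
  hence finZ: "finite Z" unfolding Z_def using finVF by blast
  have finSy: "finite S.Sy" unfolding S.Sy_def using finEF by simp
  have sub1: "V' \<subseteq> Aa \<union> Bb \<union> Cc" unfolding V'_def using ZAB S.Sy_Cc by blast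
  have sub2: "S.CS \<subseteq> E" by (rule S.CS_sub_E)
  have sub3: "\<forall>e\<in>S.CS. e \<subseteq> V'"
  proof
    fix e assume "e \<in> S.CS"
    then obtain f where f: "f \<in> EF" "e = S.cl1 f \<or> e = S.cl2 f" unfolding S.CS_def by blast
    have "fst f \<in> VF" "snd f \<in> VF" using EF_in f(1) by auto
    hence "A1 f \<in> Z" "A2 f \<in> Z" "B1 f \<in> Z" "B2 f \<in> Z" using S.selx(1,2)[OF f(1)] unfolding Z_def by auto
    moreover have "L f \<in> S.Sy" unfolding S.Sy_def using f(1) by blast
    ultimately show "e \<subseteq> V'" using f(2) unfolding V'_def S.cl1_def S.cl2_def by auto
  qed
  have cV: "card V' \<le> card Z + card S.Sy" unfolding V'_def by (rule card_Un_le)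
  have cSy: "2 * card S.Sy \<le> card S.CS"
  proof -
    have "(\<Sum>c\<in>S.Sy. 2) \<le> (\<Sum>c\<in>S.Sy. card (S.CSc c))" by (rule sum_mono) (use S.CSc_ge2[OF finEF] in blast)
    thus ?thesis using S.card_CS_sum[OF finEF] by simp
  qed
  have cCS: "card S.CS \<le> 2 * card EF" by (rule S.card_CS_le[OF finEF])
  have cEF: "card EF + t = 2 * k" using cardE kt by simp
  have ob': "2 * card Z + 2 * card EF \<le> card S.CS + 4 * k" using ob unfolding Z_def .
  have part1: "int (card V') - 4 * int t \<le> int (card S.CS)" using cV cSy ob' cEF by linarith
  have part2: "card S.CS \<le> 4 * k" using cCS cEF by linarith
  have part3: "int (card S.CS) \<ge> 4 * int k - 10^4 * int t ^ 3 \<or> (card S.CS \<ge> card V' \<and> card V' > 0)"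
  proof (cases "card V' \<le> card S.CS")
    case True
    have "VF \<noteq> {}" using cardV kt by auto
    then obtain P where P: "P \<in> VF" by blast
    hence "card P = 2" using VF_sub by blast
    hence "P \<noteq> {}" by auto
    hence "Z \<noteq> {}" using P unfolding Z_def by blast
    hence "V' \<noteq> {}" unfolding V'_def by blast
    moreover have "finite V'" unfolding V'_def using finZ finSy by simp
    ultimately have "card V' > 0" by (simp add: card_gt_0_iff)
    thus ?thesis using True by simp
  next
    case False
    hence big: "card S.CS + 2 \<le> 2 * card S.Sy + 2 * t" using cV ob' cEF by linarith
    have mle: "\<forall>c\<in>S.Sy. card (S.CSc c) \<le> 2 * t"
    proof
      fix c assume c: "c \<in> S.Sy"
      show "card (S.CSc c) \<le> 2 * t" using S.m_le_bound[OF finEF c] big by linarith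
    qed
    have q: "2 * card EF + 2 * (2 * t) * card S.Sy \<le> card S.CS + (2 * t) * card S.CS"
      by (rule S.quad_bound[OF finEF mle])
    have "(2 * t) * (card S.CS + 2) \<le> (2 * t) * (2 * card S.Sy + 2 * t)"
      by (rule mult_left_mono[OF big]) simp
    hence q2: "2 * t * card S.CS + 4 * t \<le> 4 * t * card S.Sy + 4 * t * t" by (simp add: algebra_simps)
    have tt: "t * t \<le> t ^ 3" using kt by (simp add: power3_eq_cube)
    have t3: "t \<le> t ^ 3" using tt kt by (metis le_square le_trans)
    have h1: "int (2 * card EF) + 4 * int t \<le> int (card S.CS) + 4 * int (t * t)" using q q2 by linarith
    have h2: "int (2 * card EF) = 4 * int k - 2 * int t" using cEF by linarith
    have h3: "int (t * t) \<le> int t ^ 3"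
    proof -
      have "int (t * t) \<le> int (t ^ 3)" using tt by linarith
      thus ?thesis by simp
    qed
    have h4: "0 \<le> int t ^ 3" by simp
    have h5: "(10::int)^4 * int t ^ 3 = 10000 * int t ^ 3" by simp
    define X where "X = int t ^ 3"
    define Y where "Y = int (t * t)"
    define U where "U = int (2 * card EF)"
    define W where "W = int (card S.CS)"
    have "4 * int k - 10000 * X \<le> W"
      using h1 h2 h3 h4 unfolding X_def[symmetric] Y_def[symmetric] U_def[symmetric] W_def[symmetric] by linarith
    hence "int (card S.CS) \<ge> 4 * int k - 10^4 * int t ^ 3" unfolding X_def W_def using h5 by linarith
    thus ?thesis by simp
  qed
  show ?thesis by (rule exI[of _ V'], rule exI[of _ S.CS]) (intro conjI sub1 sub2 sub3 part1 part2 part3)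
qed

end
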